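(* Let $G$ be a finite two-player zero-sum extensive form game with perfect recall, and run CFR or CFR$^+$ with alternating updates (Player 1 updated first) on $G$. Let $t\ge 0$ and let $p$ be the player about to be updated at time $t$, let $\sigma^t_p$ be $p$'s current strategy, and let $\sigma_o$ be the opponent strategy used in $p$'s update values, i.e. $\sigma_o=\sigma^t_2$ if $p=1$ and $\sigma_o=\sigma^{t+1}_1$ if $p=2$. Then for every information set $I$ of player $p$ and every $a\in A(I)$, $$v^{(\sigma^{t+1}_p,\sigma_o)}(I)_a\ge v^{(\sigma^t_p,\sigma_o)}(I)_a.$$
   Context: Extensive form game: a finite tree of histories $h$ (sequences of actions from the root $\emptyset$), terminal histories $Z$, actions $A(h)$ at nonterminal $h$, an acting player $P(h)\in\{1,2,c\}$ where $c$ is chance acting with fixed probabilities, utilities $u_1(z)=-u_2(z)$ at terminals, and for each player a partition of that player's histories into information sets $I$ (all $h\in I$ share the same legal actions $A(I)$). Perfect recall: any two histories in one information set of player $p$ pass through the same sequence of player-$p$ information sets and player-$p$ actions. A strategy $\sigma_p$ gives a distribution $\boldsymbol{\sigma}_p(I)$ over $A(I)$ for each player-$p$ information set. For a profile $\boldsymbol{\sigma}$ and terminal $z$, $\pi^{\boldsymbol\sigma}_{-p}(z)$ is the product of the probabilities of all actions on the path to $z$ taken by chance and by $p$'s opponent; for $h\sqsubseteq z$, $\pi^{\boldsymbol\sigma}_p(z\mid h)$ is the product of the probabilities under $\sigma_p$ of player $p$'s actions on the path from $h$ to $z$. Counterfactual values: $v^{\boldsymbol\sigma}_p(h):=\sum_{z\in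 Z,\,h\sqsubseteq z}\pi^{\boldsymbol\sigma}_{-p}(z)\pi^{\boldsymbol\sigma}_p(z\mid h)u_p(z)$, and for an information set $I$ of player $p$ the vector $\boldsymbol{v}^{\boldsymbol\sigma}(I)$ with components $v^{\boldsymbol\sigma}(I)_a:=\sum_{h\in I}v^{\boldsymbol\sigma}_p(ha)$, $a\in A(I)$. Let $x^+=\max(x,0)$ componentwise and $\boldsymbol{\sigma}_{\mathrm{rm}}(\boldsymbol{x}):=\boldsymbol{x}^+/(\boldsymbol{1}\cdot\boldsymbol{x}^+)$ if some $x_a>0$, else $\boldsymbol{1}/|A|$. CFR with alternating updates keeps for each information set $I$ a vector $\boldsymbol{r}^t(I)$ with $\boldsymbol{r}^0(I)=\boldsymbol 0$, plays $\boldsymbol\sigma^t(I)=\boldsymbol{\sigma}_{\mathrm{rm}}(\boldsymbol{r}^t(I))$, and updates $\boldsymbol{r}^{t+1}(I)=\boldsymbol{r}^t(I)+\boldsymbol{v}^t(I)-(\boldsymbol\sigma^t(I)\cdot\boldsymbol{v}^t(I))\boldsymbol 1$; CFR$^+$ instead keeps $\boldsymbol{q}^t(I)$ with $\boldsymbol{q}^0(I)=\boldsymbol 0$, $\boldsymbol\sigma^t(I)=\boldsymbol{\sigma}_{\mathrm{rm}}(\boldsymbol{q}^t(I))$, $\boldsymbol{q}^{t+1}(I)=(\boldsymbol{q}^t(I)+\boldsymbol{v}^t(I)-(\boldsymbol\sigma^t(I)\cdot\boldsymbol{v}^t(I))\boldsymbol 1)^+$. In both, the update values are $\boldsymbol{v}^t(I)=\boldsymbol{v}^{(\sigma^t_1,\sigma^t_2)}(I)$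 if $I$ belongs to Player 1 and $\boldsymbol{v}^t(I)=\boldsymbol{v}^{(\sigma^{t+1}_1,\sigma^t_2)}(I)$ if $I$ belongs to Player 2 (so Player 1's new strategy $\sigma^{t+1}_1$ is computed first). *)

theory Defs
  imports Complex_Main "HOL-Library.Sublist"
begin

datatype player = P1 | P2 | Chance

text \<open>Histories are action lists; hist is the
set of histories of the tree; pl gives the acting player; chance gives chance
probabilities; info maps a (non-chance, nonterminal) history to its information
set (a set of histories, i.e. the block of the partition containing it);
util is Player 1's utility at terminal histories (u_2 = - u_1).\<close>
record 'a efg =
  hist :: "'a list set"
  pl :: "'a list \<Rightarrow> player"
  chance :: "'a list \<Rightarrow> 'a \<Rightarrow> real"
  info :: "'a list \<Rightarrow> 'a list set"
  util :: "'a list \<Rightarrow> real"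

definition acts :: "'a efg \<Rightarrow> 'a list \<Rightarrow> 'a set" where
  "acts G h = {a. h @ [a] \<in> hist G}"

definition terminals :: "'a efg \<Rightarrow> 'a list set" where
  "terminals G = {h \<in> hist G. acts G h = {}}"

definition nonterm :: "'a efg \<Rightarrow> 'a list set" where
  "nonterm G = hist G - terminals G"

definition infosets :: "'a efg \<Rightarrow> player \<Rightarrow> 'a list set set" where
  "infosets G p = info G ` {h \<in> nonterm G. pl G h = p}"

text \<open>Legal actions A(I) of an information set (common to all its histories).\<close>
definition actsI :: "'a efg \<Rightarrow> 'a list set \<Rightarrow> 'a set" where
  "actsI G I = acts G (SOME h. h \<in> I)"

definition own_seq :: "'a efg \<Rightarrow> player \<Rightarrow> 'a list \<Rightarrow> ('a list set \<times> 'a) list" where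
  "own_seq G p h = map (\<lambda>i. (info G (take i h), h ! i))
      (filter (\<lambda>i. pl G (take i h) = p) [0..<length h])"

definition wf_efg :: "'a efg \<Rightarrow> bool" where
  "wf_efg G \<longleftrightarrow>
     finite (hist G) \<and> [] \<in> hist G \<and>
     (\<forall>h a. h @ [a] \<in> hist G \<longrightarrow> h \<in> hist G) \<and>
     (\<forall>h \<in> nonterm G. pl G h = Chance \<longrightarrow>
        (\<forall>a \<in> acts G h. chance G h a \<ge> 0) \<and> sum (chance G h) (acts G h) = 1) \<and>
     (\<forall>h \<in> nonterm G. pl G h \<noteq> Chance \<longrightarrow>
        h \<in> info G h \<and>
        (\<forall>h' \<in> info G h. h' \<in> nonterm G \<and> pl G h' = pl G h \<and> info G h' = info G h
                          \<and> acts G h' = acts G h)) \<and>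
     (\<forall>h \<in> nonterm G. \<forall>h' \<in> nonterm G. pl G h \<noteq> Chance \<longrightarrow> pl G h' = pl G h \<longrightarrow>
        info G h = info G h' \<longrightarrow> own_seq G (pl G h) h = own_seq G (pl G h) h')"

type_synonym 'a strat = "'a list set \<Rightarrow> 'a \<Rightarrow> real"

definition act_prob :: "'a efg \<Rightarrow> 'a strat \<times> 'a strat \<Rightarrow> 'a list \<Rightarrow> 'a \<Rightarrow> real" where
  "act_prob G \<sigma> h a = (case pl G h of Chance \<Rightarrow> chance G h a
                                   | P1 \<Rightarrow> fst \<sigma> (info G h) a
                                   | P2 \<Rightarrow> snd \<sigma> (info G h) a)"

definition u :: "'a efg \<Rightarrow> player \<Rightarrow> 'a list \<Rightarrow> real" where
  "u G p z = (if p = P1 then util G z else - util G z)"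

definition pi_opp :: "'a efg \<Rightarrow> 'a strat \<times> 'a strat \<Rightarrow> player \<Rightarrow> 'a list \<Rightarrow> real" where
  "pi_opp G \<sigma> p z = (\<Prod>i \<in> {i. i < length z \<and> pl G (take i z) \<noteq> p}.
                        act_prob G \<sigma> (take i z) (z ! i))"

definition pi_own :: "'a efg \<Rightarrow> 'a strat \<times> 'a strat \<Rightarrow> player \<Rightarrow> 'a list \<Rightarrow> 'a list \<Rightarrow> real" where
  "pi_own G \<sigma> p h z = (\<Prod>i \<in> {i. length h \<le> i \<and> i < length z \<and> pl G (take i z) = p}.
                        act_prob G \<sigma> (take i z) (z ! i))"

definition cfv_hist :: "'a efg \<Rightarrow> 'a strat \<times> 'a strat \<Rightarrow> player \<Rightarrow> 'a list \<Rightarrow> real" where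
  "cfv_hist G \<sigma> p h = (\<Sum>z \<in> {z \<in> terminals G. prefix h z}.
                          pi_opp G \<sigma> p z * pi_own G \<sigma> p h z * u G p z)"

definition cfv :: "'a efg \<Rightarrow> 'a strat \<times> 'a strat \<Rightarrow> player \<Rightarrow> 'a list set \<Rightarrow> 'a \<Rightarrow> real" where
  "cfv G \<sigma> p I a = (\<Sum>h \<in> I. cfv_hist G \<sigma> p (h @ [a]))"

definition sigma_rm :: "'a set \<Rightarrow> ('a \<Rightarrow> real) \<Rightarrow> 'a \<Rightarrow> real" where
  "sigma_rm A x a = (if a \<in> A then
      (if \<exists>b \<in> A. x b > 0 then max (x a) 0 / (\<Sum>b \<in> A. max (x b) 0)
       else 1 / real (card A))
    else 0)"

definition strat_of :: "'a efg \<Rightarrow> 'a strat \<Rightarrow> 'a strat" where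
  "strat_of G R I = sigma_rm (actsI G I) (R I)"

definition comp :: "'a strat \<times> 'a strat \<Rightarrow> player \<Rightarrow> 'a strat" where
  "comp \<sigma> p = (if p = P1 then fst \<sigma> else snd \<sigma>)"

text \<open>Update of the regret vectors (cfrplus = False: CFR, cfrplus = True: CFR+) of all
information sets of player p, with update values computed under profile sigma.\<close>
definition upd :: "bool \<Rightarrow> 'a efg \<Rightarrow> player \<Rightarrow> 'a strat \<times> 'a strat \<Rightarrow> 'a strat \<Rightarrow> 'a strat" where
  "upd cfrplus G p \<sigma> R = (\<lambda>I a. if I \<in> infosets G p then
      (let x = R I a + cfv G \<sigma> p I a
               - (\<Sum>b \<in> actsI G I. comp \<sigma> p I b * cfv G \<sigma> p I b)
       in if cfrplus then max x 0 else x)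
    else R I a)"

text \<open>One alternating iteration: Player 1 updated first with (sigma_1^t, sigma_2^t),
then Player 2 with (sigma_1^{t+1}, sigma_2^t).\<close>
definition cfr_step :: "bool \<Rightarrow> 'a efg \<Rightarrow> 'a strat \<Rightarrow> 'a strat" where
  "cfr_step cfrplus G R = (let R1 = upd cfrplus G P1 (strat_of G R, strat_of G R) R
                        in upd cfrplus G P2 (strat_of G R1, strat_of G R) R1)"

definition regrets :: "bool \<Rightarrow> 'a efg \<Rightarrow> nat \<Rightarrow> 'a strat" where
  "regrets cfrplus G t = (cfr_step cfrplus G ^^ t) (\<lambda>_ _. 0)"

text \<open>sigma^t: on each player's information sets, that player's strategy at time t.\<close>
definition cfr_sigma :: "bool \<Rightarrow> 'a efg \<Rightarrow> nat \<Rightarrow> 'a strat" where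
  "cfr_sigma cfrplus G t = strat_of G (regrets cfrplus G t)"

end

theory Submission
  imports Defs
begin

lemma own_seq_take:
  "i \<le> length z \<Longrightarrow> own_seq G p (take i z) =
     map (\<lambda>j. (info G (take j z), z ! j)) (filter (\<lambda>j. pl G (take j z) = p) [0..<i])"
proof -
  assume i: "i \<le> length z"
  have l: "length (take i z) = i" using i by simp
  have f: "filter (\<lambda>j. pl G (take j (take i z)) = p) [0..<i] = filter (\<lambda>j. pl G (take j z) = p) [0..<i]"
    by (rule filter_cong) (auto simp: min_def)
  show ?thesis unfolding own_seq_def l f
    by (rule map_cong) (auto simp: min_def)
qed

lemma own_seq_split:
  "i \<le> length z \<Longrightarrow> own_seq G p z = own_seq G p (take i z) @
     map (\<lambda>j. (info G (take j z), z ! j)) (filter (\<lambda>j. pl G (take j z) = p) [i..<length z])"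
proof -
  assume i: "i \<le> length z"
  have "[0..<length z] = [0..<i] @ [i..<length z]"
    using upt_add_eq_append[of 0 i "length z - i"] i by simp
  then show ?thesis using own_seq_take[OF i, of G p] unfolding own_seq_def by simp
qed

lemma own_seq_prefix: "prefix h z \<Longrightarrow> prefix (own_seq G p h) (own_seq G p z)"
proof -
  assume "prefix h z"
  then have h: "h = take (length h) z" "length h \<le> length z"
    by (auto simp: prefix_def)
  show ?thesis using own_seq_split[OF h(2), of G p] h(1) by (metis prefixI)
qed

lemma own_seq_snoc:
  "own_seq G p (h @ [a]) = own_seq G p h @ (if pl G h = p then [(info G h, a)] else [])"
  using own_seq_split[of "length h" "h @ [a]" G p] by simp

lemma own_seq_nth:
  assumes k: "k < length (own_seq G p z)"
  shows "\<exists>i < length z. pl G (take i z) = p \<and> own_seq G p z ! k = (info G (take i z), z ! i)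
            \<and> own_seq G p (take i z) = take k (own_seq G p z)"
proof -
  define P where "P = (\<lambda>j. pl G (take j z) = p)"
  define F where "F = (\<lambda>j. (info G (take j z), z ! j))"
  define xs where "xs = filter P [0..<length z]"
  have os: "own_seq G p z = map F xs" unfolding own_seq_def xs_def F_def P_def by simp
  have kx: "k < length xs" using k os by simp
  define i where "i = xs ! k"
  have iin: "i \<in> set xs" using kx i_def by simp
  then have il: "i < length z" and Pi: "P i" unfolding xs_def by auto
  have "[0..<length z] = [0..<i] @ [i..<length z]"
    using upt_add_eq_append[of 0 i "length z - i"] il by simp
  moreover have "[i..<length z] = i # [Suc i..<length z]" using il upt_conv_Cons by blast
  ultimately have xs2: "xs = filter P [0..<i] @ i # filter P [Suc i..<length z]"
    unfolding xs_def using Pi by simp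
  have d: "distinct xs" unfolding xs_def by simp
  have "xs ! length (filter P [0..<i]) = i" using xs2 by (simp add: nth_append)
  moreover have "length (filter P [0..<i]) < length xs" using xs2 by simp
  ultimately have kk: "length (filter P [0..<i]) = k"
    using nth_eq_iff_index_eq[OF d _ kx] i_def by metis
  have tk: "take k xs = filter P [0..<i]" using xs2 kk by simp
  have "own_seq G p (take i z) = map F (filter P [0..<i])"
    using own_seq_take[of i z G p] il unfolding F_def P_def by simp
  also have "\<dots> = take k (own_seq G p z)" using os tk by (simp add: take_map)
  finally show ?thesis using il Pi os kx i_def unfolding P_def F_def by (auto intro!: exI[of _ i])
qed

definition oprod :: "'a strat \<Rightarrow> ('a list set \<times> 'a) list \<Rightarrow> real" where
  "oprod sp l = prod_list (map (\<lambda>(K, b). sp K b) l)"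

lemma pi_own_oprod:
  assumes "prefix h z" "p \<noteq> Chance"
  shows "pi_own G \<sigma> p h z = oprod (comp \<sigma> p) (drop (length (own_seq G p h)) (own_seq G p z))"
proof -
  define P where "P = (\<lambda>j. pl G (take j z) = p)"
  define F where "F = (\<lambda>j. (info G (take j z), z ! j))"
  have h: "h = take (length h) z" "length h \<le> length z"
    using assms(1) by (auto simp: prefix_def)
  have "own_seq G p z = own_seq G p h @ map F (filter P [length h..<length z])"
    using own_seq_split[OF h(2), of G p] h(1) unfolding P_def F_def by simp
  then have dr: "drop (length (own_seq G p h)) (own_seq G p z) = map F (filter P [length h..<length z])"
    by simp
  have "oprod (comp \<sigma> p) (map F (filter P [length h..<length z]))
     = prod_list (map (\<lambda>j. act_prob G \<sigma> (take j z) (z ! j)) (filter P [length h..<length z]))"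
    unfolding oprod_def map_map
    by (rule arg_cong[where f=prod_list], rule map_cong)
       (use assms(2) in \<open>auto simp: F_def P_def act_prob_def comp_def split: player.splits\<close>)
  also have "\<dots> = (\<Prod>j \<in> set (filter P [length h..<length z]). act_prob G \<sigma> (take j z) (z ! j))"
    by (rule prod.distinct_set_conv_list[symmetric]) simp
  also have "set (filter P [length h..<length z]) = {i. length h \<le> i \<and> i < length z \<and> pl G (take i z) = p}"
    unfolding P_def by auto
  finally show ?thesis unfolding pi_own_def dr by simp
qed

definition Zs :: "'a efg \<Rightarrow> player \<Rightarrow> ('a list set \<times> 'a) list \<Rightarrow> 'a list set" where
  "Zs G p s = {z \<in> terminals G. prefix s (own_seq G p z)}"

definition V :: "'a efg \<Rightarrow> player \<Rightarrow> ('a list \<Rightarrow> real) \<Rightarrow> 'a strat \<Rightarrow> ('a list set \<times> 'a) list \<Rightarrow> real" where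
  "V G p po sp s = (\<Sum>z \<in> Zs G p s. po z * u G p z * oprod sp (drop (length s) (own_seq G p z)))"

definition Nx :: "'a efg \<Rightarrow> player \<Rightarrow> ('a list set \<times> 'a) list \<Rightarrow> ('a list set \<times> 'a) set" where
  "Nx G p s = {x. Zs G p (s @ [x]) \<noteq> {}}"

lemma Nx_finite: "finite (terminals G) \<Longrightarrow> finite (Nx G p s)"
proof -
  assume f: "finite (terminals G)"
  have "Nx G p s \<subseteq> (\<lambda>z. own_seq G p z ! length s) ` terminals G"
  proof
    fix x assume "x \<in> Nx G p s"
    then obtain z where z: "z \<in> terminals G" "prefix (s @ [x]) (own_seq G p z)"
      unfolding Nx_def Zs_def by auto
    then have "own_seq G p z ! length s = x"
      by (metis length_append_singleton lessI nth_append_length prefix_def nth_append)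
    then show "x \<in> (\<lambda>z. own_seq G p z ! length s) ` terminals G" using z by auto
  qed
  then show ?thesis using f finite_subset by blast
qed

lemma V_empty: "x \<notin> Nx G p s \<Longrightarrow> V G p po sp (s @ [x]) = 0"
  unfolding V_def Nx_def by simp

lemma V_decomp:
  assumes f: "finite (terminals G)"
  shows "V G p po sp s = (\<Sum>z \<in> {z \<in> terminals G. own_seq G p z = s}. po z * u G p z)
     + (\<Sum>x \<in> Nx G p s. sp (fst x) (snd x) * V G p po sp (s @ [x]))"
proof -
  define E where "E = {z \<in> terminals G. own_seq G p z = s}"
  define T where "T = (\<lambda>z. po z * u G p z * oprod sp (drop (length s) (own_seq G p z)))"
  have fZ: "finite (Zs G p s')" for s' using f unfolding Zs_def by simp
  have split: "Zs G p s = E \<union> (\<Union>x \<in> Nx G p s. Zs G p (s @ [x]))"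
  proof (rule set_eqI, rule iffI)
    fix z assume z: "z \<in> Zs G p s"
    show "z \<in> E \<union> (\<Union>x \<in> Nx G p s. Zs G p (s @ [x]))"
    proof (cases "own_seq G p z = s")
      case True then show ?thesis using z unfolding E_def Zs_def by auto
    next
      case False
      from z obtain r where r: "own_seq G p z = s @ r" unfolding Zs_def prefix_def by auto
      with False obtain x r' where "r = x # r'" by (cases r) auto
      with r z have "z \<in> Zs G p (s @ [x])" unfolding Zs_def by auto
      then show ?thesis unfolding Nx_def by blast
    qed
  next
    fix z assume "z \<in> E \<union> (\<Union>x \<in> Nx G p s. Zs G p (s @ [x]))"
    then show "z \<in> Zs G p s" unfolding E_def Zs_def
      by (auto intro: prefix_order.trans[OF prefix_prefix[of s]])
  qed
  have d1: "E \<inter> (\<Union>x \<in> Nx G p s. Zs G p (s @ [x])) = {}"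
    unfolding E_def Zs_def by (auto dest: prefix_length_le)
  have d2: "Zs G p (s @ [x]) \<inter> Zs G p (s @ [y]) = {}" if "x \<noteq> y" for x y
    using that unfolding Zs_def by (auto simp: prefix_def)
  have "V G p po sp s = sum T E + sum T (\<Union>x \<in> Nx G p s. Zs G p (s @ [x]))"
    unfolding V_def T_def[symmetric] split
    by (rule sum.union_disjoint) (use fZ split d1 f in \<open>auto simp: E_def intro: Nx_finite[OF f]\<close>)
  also have "sum T (\<Union>x \<in> Nx G p s. Zs G p (s @ [x])) = (\<Sum>x \<in> Nx G p s. sum T (Zs G p (s @ [x])))"
    by (rule sum.UNION_disjoint) (use fZ Nx_finite[OF f] d2 in auto)
  also have "\<dots> = (\<Sum>x \<in> Nx G p s. sp (fst x) (snd x) * V G p po sp (s @ [x]))"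
  proof (rule sum.cong[OF refl])
    fix x assume "x \<in> Nx G p s"
    have "T z = sp (fst x) (snd x) * (po z * u G p z * oprod sp (drop (length (s @ [x])) (own_seq G p z)))"
      if "z \<in> Zs G p (s @ [x])" for z
    proof -
      from that obtain r where r: "own_seq G p z = s @ x # r" unfolding Zs_def prefix_def by auto
      show ?thesis unfolding T_def r by (cases x) (simp add: oprod_def)
    qed
    then show "sum T (Zs G p (s @ [x])) = sp (fst x) (snd x) * V G p po sp (s @ [x])"
      unfolding V_def sum_distrib_left by (rule sum.cong[OF refl])
  qed
  also have "sum T E = (\<Sum>z \<in> E. po z * u G p z)"
    by (rule sum.cong) (auto simp: T_def E_def oprod_def)
  finally show ?thesis unfolding E_def .
qed

lemma regroup:
  fixes f :: "'k \<times> 'b \<Rightarrow> real"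
  assumes fN: "finite N" and fB: "\<And>K. finite (B K)" and NB: "\<And>K b. (K, b) \<in> N \<Longrightarrow> b \<in> B K"
    and z: "\<And>x. x \<notin> N \<Longrightarrow> f x = 0"
  shows "sum f N = (\<Sum>K \<in> fst ` N. \<Sum>b \<in> B K. f (K, b))"
proof -
  have "N \<subseteq> Sigma (fst ` N) B" using NB by force
  then have "sum f N = sum f (Sigma (fst ` N) B)"
    by (intro sum.mono_neutral_left) (use fN fB z in auto)
  also have "\<dots> = (\<Sum>K \<in> fst ` N. \<Sum>b \<in> B K. f (K, b))"
    by (subst sum.Sigma) (use fN fB in auto)
  finally show ?thesis .
qed

lemma V_mono:
  assumes f: "finite (terminals G)"
    and nn: "\<And>K b. sp' K b \<ge> 0"
    and NB: "\<And>s K b. (K, b) \<in> Nx G p s \<Longrightarrow> b \<in> B K"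
    and fB: "\<And>K. finite (B K)"
    and H: "\<And>s K b0. (K, b0) \<in> Nx G p s \<Longrightarrow>
       (\<Sum>b \<in> B K. sp K b * V G p po sp (s @ [(K, b)])) \<le> (\<Sum>b \<in> B K. sp' K b * V G p po sp (s @ [(K, b)]))"
  shows "V G p po sp s \<le> V G p po sp' s"
proof -
  define M where "M = Max (insert 0 ((\<lambda>z. length (own_seq G p z)) ` terminals G))"
  have Mle: "length (own_seq G p z) \<le> M" if "z \<in> terminals G" for z
    unfolding M_def using f that by (intro Max_ge) auto
  show ?thesis
  proof (induction s rule: measure_induct_rule[of "\<lambda>s. Suc M - length s"])
    case (less s)
    have lt: "Suc M - length (s @ [x]) < Suc M - length s" if "x \<in> Nx G p s" for x
    proof -
      from that obtain z where "z \<in> terminals G" "prefix (s @ [x]) (own_seq G p z)"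
        unfolding Nx_def Zs_def by auto
      then have "length (s @ [x]) \<le> M" using Mle by (meson order.trans prefix_length_le)
      then show ?thesis by simp
    qed
    let ?N = "Nx G p s"
    have fN: "finite ?N" by (rule Nx_finite[OF f])
    have "(\<Sum>x \<in> ?N. sp (fst x) (snd x) * V G p po sp (s @ [x]))
        = (\<Sum>K \<in> fst ` ?N. \<Sum>b \<in> B K. sp K b * V G p po sp (s @ [(K, b)]))"
      by (rule regroup[OF fN fB, where f="\<lambda>x. sp (fst x) (snd x) * V G p po sp (s @ [x])", simplified])
         (use NB in \<open>auto simp: V_empty\<close>)
    also have "\<dots> \<le> (\<Sum>K \<in> fst ` ?N. \<Sum>b \<in> B K. sp' K b * V G p po sp (s @ [(K, b)]))"
      by (rule sum_mono) (use H in force)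
    also have "\<dots> = (\<Sum>x \<in> ?N. sp' (fst x) (snd x) * V G p po sp (s @ [x]))"
      by (rule regroup[OF fN fB, where f="\<lambda>x. sp' (fst x) (snd x) * V G p po sp (s @ [x])", simplified, symmetric])
         (use NB in \<open>auto simp: V_empty\<close>)
    also have "\<dots> \<le> (\<Sum>x \<in> ?N. sp' (fst x) (snd x) * V G p po sp' (s @ [x]))"
      by (rule sum_mono, rule mult_left_mono) (use less lt nn in auto)
    finally have ineq: "(\<Sum>x \<in> ?N. sp (fst x) (snd x) * V G p po sp (s @ [x]))
        \<le> (\<Sum>x \<in> ?N. sp' (fst x) (snd x) * V G p po sp' (s @ [x]))" .
    show ?case
      using V_decomp[OF f, where p=p and po=po and sp=sp and s=s] V_decomp[OF f, where p=p and po=po and sp=sp' and s=s] ineq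
      by linarith
  qed
qed

lemma wf_fin: "wf_efg G \<Longrightarrow> finite (hist G)" unfolding wf_efg_def by (elim conjE) assumption

lemma fin_term: "wf_efg G \<Longrightarrow> finite (terminals G)"
  unfolding terminals_def by (rule finite_subset[OF _ wf_fin]) auto

lemma fin_acts: "wf_efg G \<Longrightarrow> finite (acts G g)"
proof -
  assume "wf_efg G"
  then have "finite ((\<lambda>a. g @ [a]) -` hist G)" using wf_fin by (intro finite_vimageI) (auto simp: inj_def)
  then show ?thesis unfolding acts_def vimage_def by simp
qed

lemma wf_info:
  "wf_efg G \<Longrightarrow> \<forall>h \<in> nonterm G. pl G h \<noteq> Chance \<longrightarrow>
        h \<in> info G h \<and>
        (\<forall>h' \<in> info G h. h' \<in> nonterm G \<and> pl G h' = pl G h \<and> info G h' = info G h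
                          \<and> acts G h' = acts G h)"
  unfolding wf_efg_def by (elim conjE) assumption

lemma wf_pr:
  "wf_efg G \<Longrightarrow> \<forall>h \<in> nonterm G. \<forall>h' \<in> nonterm G. pl G h \<noteq> Chance \<longrightarrow> pl G h' = pl G h \<longrightarrow>
        info G h = info G h' \<longrightarrow> own_seq G (pl G h) h = own_seq G (pl G h) h'"
  unfolding wf_efg_def by (elim conjE) assumption

lemma wf_closed0: "wf_efg G \<Longrightarrow> \<forall>h a. h @ [a] \<in> hist G \<longrightarrow> h \<in> hist G"
  unfolding wf_efg_def by (elim conjE) assumption

lemma wf_closed: "wf_efg G \<Longrightarrow> h @ [a] \<in> hist G \<Longrightarrow> h \<in> hist G"
  using wf_closed0 by blast

lemma hist_prefix:
  assumes wf: "wf_efg G" and z: "z \<in> hist G" and pr: "prefix g z"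
  shows "g \<in> hist G"
proof -
  obtain r where r: "z = g @ r" using pr by (auto simp: prefix_def)
  have "g @ r \<in> hist G \<Longrightarrow> g \<in> hist G"
  proof (induction r rule: rev_induct)
    case Nil then show ?case by simp
  next
    case (snoc x xs)
    then show ?case using wf_closed[OF wf, of "g @ xs" x] by simp
  qed
  then show ?thesis using z r by simp
qed

lemma info_facts:
  assumes wf: "wf_efg G" and g: "g \<in> nonterm G" "pl G g \<noteq> Chance" and h: "h \<in> info G g"
  shows "h \<in> nonterm G" "pl G h = pl G g" "info G h = info G g" "acts G h = acts G g"
    "own_seq G (pl G g) h = own_seq G (pl G g) g"
proof -
  have c: "h \<in> nonterm G \<and> pl G h = pl G g \<and> info G h = info G g \<and> acts G h = acts G g"
    using wf_info[OF wf] g h by blast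
  then show "h \<in> nonterm G" "pl G h = pl G g" "info G h = info G g" "acts G h = acts G g"
    by auto
  have "own_seq G (pl G g) g = own_seq G (pl G g) h"
    using wf_pr[OF wf] g(1) c[THEN conjunct1] g(2) c by blast
  then show "own_seq G (pl G g) h = own_seq G (pl G g) g" by simp
qed

lemma g_in_info: "wf_efg G \<Longrightarrow> g \<in> nonterm G \<Longrightarrow> pl G g \<noteq> Chance \<Longrightarrow> g \<in> info G g"
  using wf_info by blast

lemma actsI_info:
  assumes wf: "wf_efg G" and g: "g \<in> nonterm G" "pl G g \<noteq> Chance"
  shows "actsI G (info G g) = acts G g"
proof -
  have "(SOME h. h \<in> info G g) \<in> info G g" using g_in_info[OF wf g] by (rule someI)
  then show ?thesis unfolding actsI_def using info_facts(4)[OF wf g] by blast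
qed

lemma cfv_V:
  assumes wf: "wf_efg G" and p: "p \<noteq> Chance" and g: "g \<in> nonterm G" "pl G g = p"
  shows "cfv G \<sigma> p (info G g) a = V G p (pi_opp G \<sigma> p) (comp \<sigma> p) (own_seq G p g @ [(info G g, a)])"
proof -
  define I where "I = info G g"
  define s where "s = own_seq G p g"
  define T where "T = (\<lambda>z. pi_opp G \<sigma> p z * u G p z * oprod (comp \<sigma> p) (drop (Suc (length s)) (own_seq G p z)))"
  define A where "A = (\<lambda>h. {z \<in> terminals G. prefix (h @ [a]) z})"
  have gp: "pl G g \<noteq> Chance" using g p by simp
  have hI: "h \<in> nonterm G \<and> pl G h = p \<and> info G h = I \<and> own_seq G p h = s" if "h \<in> I" for h
    using info_facts[OF wf g(1) gp, of h] that g unfolding I_def s_def by auto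
  have fI: "finite I"
  proof -
    have "I \<subseteq> hist G" using hI unfolding nonterm_def by auto
    then show ?thesis using wf_fin[OF wf] finite_subset by blast
  qed
  have fA: "finite (A h)" for h using fin_term[OF wf] unfolding A_def by simp
  have "cfv G \<sigma> p I a = (\<Sum>h \<in> I. sum T (A h))"
    unfolding cfv_def
  proof (rule sum.cong[OF refl])
    fix h assume h: "h \<in> I"
    have os: "own_seq G p (h @ [a]) = s @ [(I, a)]" using hI[OF h] by (simp add: own_seq_snoc)
    show "cfv_hist G \<sigma> p (h @ [a]) = sum T (A h)"
      unfolding cfv_hist_def A_def
      by (rule sum.cong[OF refl]) (auto simp: T_def pi_own_oprod[OF _ p] os)
  qed
  also have "\<dots> = sum T (\<Union>h \<in> I. A h)"
  proof (rule sum.UNION_disjoint[symmetric])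
    show "finite I" by (rule fI)
    show "\<forall>h\<in>I. finite (A h)" using fA by simp
    show "\<forall>h1\<in>I. \<forall>h2\<in>I. h1 \<noteq> h2 \<longrightarrow> A h1 \<inter> A h2 = {}"
    proof (intro ballI impI)
      fix h1 h2 assume h1: "h1 \<in> I" and h2: "h2 \<in> I" and ne: "h1 \<noteq> h2"
      show "A h1 \<inter> A h2 = {}"
      proof (rule ccontr)
        assume "A h1 \<inter> A h2 \<noteq> {}"
        then obtain z where z1: "prefix (h1 @ [a]) z" and z2: "prefix (h2 @ [a]) z"
          unfolding A_def by auto
        have c: "prefix (h1 @ [a]) h2 \<or> prefix (h2 @ [a]) h1"
        proof -
          have pz: "prefix h1 z" "prefix h2 z" using z1 z2 prefix_order.trans prefix_prefix by blast+
          then have "prefix h1 h2 \<or> prefix h2 h1" using prefix_same_cases by blast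
          then show ?thesis
          proof
            assume "prefix h1 h2"
            then have "length h1 < length h2" using ne by (metis prefix_length_less strict_prefix_def)
            then have "length (h1 @ [a]) \<le> length h2" by simp
            then show ?thesis using prefix_length_prefix[OF z1 pz(2)] by blast
          next
            assume "prefix h2 h1"
            then have "length h2 < length h1" using ne by (metis prefix_length_less strict_prefix_def)
            then have "length (h2 @ [a]) \<le> length h1" by simp
            then show ?thesis using prefix_length_prefix[OF z2 pz(1)] by blast
          qed
        qed
        have o1: "own_seq G p (h1 @ [a]) = s @ [(I, a)]" using hI[OF h1] by (simp add: own_seq_snoc)
        have o2: "own_seq G p (h2 @ [a]) = s @ [(I, a)]" using hI[OF h2] by (simp add: own_seq_snoc)
        from c show False
        proof
          assume "prefix (h1 @ [a]) h2"
          then have "prefix (own_seq G p (h1 @ [a])) (own_seq G p h2)" by (rule own_seq_prefix)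
          then have "prefix (s @ [(I, a)]) s" using o1 hI[OF h2] by simp
          then have "length (s @ [(I, a)]) \<le> length s" by (rule prefix_length_le)
          then show False by simp
        next
          assume "prefix (h2 @ [a]) h1"
          then have "prefix (own_seq G p (h2 @ [a])) (own_seq G p h1)" by (rule own_seq_prefix)
          then have "prefix (s @ [(I, a)]) s" using o2 hI[OF h1] by simp
          then have "length (s @ [(I, a)]) \<le> length s" by (rule prefix_length_le)
          then show False by simp
        qed
      qed
    qed
  qed
  also have "(\<Union>h \<in> I. A h) = Zs G p (s @ [(I, a)])"
  proof (rule set_eqI, rule iffI)
    fix z assume "z \<in> (\<Union>h \<in> I. A h)"
    then obtain h where h: "h \<in> I" "z \<in> terminals G" "prefix (h @ [a]) z" unfolding A_def by auto
    have "own_seq G p (h @ [a]) = s @ [(I, a)]" using hI[OF h(1)] by (simp add: own_seq_snoc)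
    moreover have "prefix (own_seq G p (h @ [a])) (own_seq G p z)" by (rule own_seq_prefix[OF h(3)])
    ultimately show "z \<in> Zs G p (s @ [(I, a)])" using h(2) unfolding Zs_def by simp
  next
    fix z assume z: "z \<in> Zs G p (s @ [(I, a)])"
    then have zt: "z \<in> terminals G" and pz: "prefix (s @ [(I, a)]) (own_seq G p z)" unfolding Zs_def by auto
    have k: "length s < length (own_seq G p z)" using prefix_length_le[OF pz] by simp
    obtain i where i: "i < length z" "pl G (take i z) = p"
      "own_seq G p z ! length s = (info G (take i z), z ! i)"
      using own_seq_nth[OF k] by blast
    have "own_seq G p z ! length s = (I, a)" using pz by (auto simp: prefix_def nth_append)
    then have ia: "info G (take i z) = I" "z ! i = a" using i by auto
    have zh: "z \<in> hist G" using zt unfolding terminals_def by simp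
    have tk: "take (Suc i) z = take i z @ [a]" using i(1) ia(2) by (simp add: take_Suc_conv_app_nth)
    have pre: "prefix (take i z @ [a]) z" unfolding tk[symmetric] by (rule take_is_prefix)
    have ha: "take i z @ [a] \<in> hist G" using hist_prefix[OF wf zh pre] .
    have "take i z \<in> hist G" using wf_closed[OF wf ha] .
    moreover have "a \<in> acts G (take i z)" using ha unfolding acts_def by simp
    ultimately have "take i z \<in> nonterm G"
      unfolding nonterm_def terminals_def by blast
    then have "take i z \<in> I" using g_in_info[OF wf, of "take i z"] i(2) p ia(1) by auto
    then show "z \<in> (\<Union>h \<in> I. A h)" using pre zt unfolding A_def by auto
  qed
  finally show ?thesis unfolding V_def T_def I_def[symmetric] s_def[symmetric] by simp
qed

lemma rm_sum1:
  assumes fA: "finite A" and ne: "A \<noteq> {}"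
  shows "(\<Sum>b \<in> A. sigma_rm A y b) = 1"
proof (cases "\<exists>b \<in> A. y b > 0")
  case True
  then obtain b0 where b0: "b0 \<in> A" "y b0 > 0" by blast
  have "(\<Sum>b \<in> A. max (y b) 0) \<ge> max (y b0) 0"
    by (rule member_le_sum) (use b0 fA in auto)
  then have pos: "(\<Sum>b \<in> A. max (y b) 0) > 0" using b0 by linarith
  have "(\<Sum>b \<in> A. sigma_rm A y b) = (\<Sum>b \<in> A. max (y b) 0 / (\<Sum>b \<in> A. max (y b) 0))"
    by (rule sum.cong) (use True in \<open>auto simp: sigma_rm_def\<close>)
  also have "\<dots> = 1" using pos by (simp add: sum_divide_distrib[symmetric])
  finally show ?thesis .
next
  case False
  have "(\<Sum>b \<in> A. sigma_rm A y b) = (\<Sum>b \<in> A. 1 / real (card A))"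
    by (rule sum.cong) (use False in \<open>auto simp: sigma_rm_def\<close>)
  also have "\<dots> = 1" using fA ne by simp
  finally show ?thesis .
qed

lemma rm_nonneg: "sigma_rm A y b \<ge> 0"
  unfolding sigma_rm_def by (auto intro!: divide_nonneg_nonneg sum_nonneg)

lemma trm_aux:
  fixes w y d :: real
  assumes "w = y + d \<or> w = max (y + d) 0"
  shows "(max w 0 - max y 0) * d \<ge> 0"
proof (cases "d \<ge> 0")
  case True
  have "w \<ge> y" using assms True by auto
  then have "max w 0 - max y 0 \<ge> 0" by simp
  then show ?thesis using True by simp
next
  case False
  have "max w 0 \<le> max y 0" using assms False by auto
  then have "max w 0 - max y 0 \<le> 0" by simp
  then show ?thesis using False by (simp add: mult_nonpos_nonpos)
qed

lemma rm_step:
  fixes y v :: "'b \<Rightarrow> real"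
  assumes fA: "finite A" and ne: "A \<noteq> {}"
    and c: "c = (\<Sum>b \<in> A. sigma_rm A y b * v b)"
    and x: "\<And>b. x b = (if cfrplus then max (y b + v b - c) 0 else y b + v b - c)"
  shows "(\<Sum>b \<in> A. sigma_rm A y b * v b) \<le> (\<Sum>b \<in> A. sigma_rm A x b * v b)"
proof -
  define d where "d = (\<lambda>b. v b - c)"
  have xd: "x b = (if cfrplus then max (y b + d b) 0 else y b + d b)" for b using x d_def by (simp add: algebra_simps)
  have sd: "(\<Sum>b \<in> A. sigma_rm A z b * v b) = (\<Sum>b \<in> A. sigma_rm A z b * d b) + c" for z
  proof -
    have "(\<Sum>b \<in> A. sigma_rm A z b * v b) = (\<Sum>b \<in> A. sigma_rm A z b * d b + sigma_rm A z b * c)"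
      by (rule sum.cong) (auto simp: d_def algebra_simps)
    also have "\<dots> = (\<Sum>b \<in> A. sigma_rm A z b * d b) + c"
    proof -
      have "(\<Sum>b \<in> A. sigma_rm A z b * c) = (\<Sum>b \<in> A. sigma_rm A z b) * c"
        by (rule sum_distrib_right[symmetric])
      then show ?thesis by (simp add: sum.distrib rm_sum1[OF fA ne])
    qed
    finally show ?thesis .
  qed
  have sy0: "(\<Sum>b \<in> A. sigma_rm A y b * d b) = 0" using sd[of y] c by linarith
  have trm: "(max (x b) 0 - max (y b) 0) * d b \<ge> 0" for b
    by (rule trm_aux) (simp add: xd)
  define X where "X = (\<Sum>b \<in> A. max (x b) 0 * d b)"
  define Y where "Y = (\<Sum>b \<in> A. max (y b) 0 * d b)"
  have XY: "X - Y = (\<Sum>b \<in> A. (max (x b) 0 - max (y b) 0) * d b)"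
    unfolding X_def Y_def sum_subtractf[symmetric] by (rule sum.cong) (simp_all add: left_diff_distrib)
  have XYn: "X - Y \<ge> 0" unfolding XY by (rule sum_nonneg) (use trm in auto)
  have Y0: "Y = 0"
  proof (cases "\<exists>b \<in> A. y b > 0")
    case True
    have "(\<Sum>b \<in> A. sigma_rm A y b * d b) = (\<Sum>b \<in> A. max (y b) 0 * d b) / (\<Sum>b \<in> A. max (y b) 0)"
      unfolding sum_divide_distrib
      by (rule sum.cong) (use True in \<open>auto simp: sigma_rm_def\<close>)
    moreover have "(\<Sum>b \<in> A. max (y b) 0) > 0"
    proof -
      obtain b0 where b0: "b0 \<in> A" "y b0 > 0" using True by blast
      have "(\<Sum>b \<in> A. max (y b) 0) \<ge> max (y b0) 0"
        by (rule member_le_sum) (use b0 fA in auto)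
      then show ?thesis using b0 by linarith
    qed
    ultimately show ?thesis using sy0 unfolding Y_def by simp
  next
    case False
    then show ?thesis unfolding Y_def by (intro sum.neutral) (auto simp: max_def)
  qed
  have goal: "(\<Sum>b \<in> A. sigma_rm A x b * d b) \<ge> 0"
  proof (cases "\<exists>b \<in> A. x b > 0")
    case True
    have "(\<Sum>b \<in> A. sigma_rm A x b * d b) = X / (\<Sum>b \<in> A. max (x b) 0)"
      unfolding X_def sum_divide_distrib
      by (rule sum.cong) (use True in \<open>auto simp: sigma_rm_def\<close>)
    moreover have "X \<ge> 0" using XYn Y0 by simp
    moreover have "(\<Sum>b \<in> A. max (x b) 0) \<ge> 0" by (rule sum_nonneg) simp
    ultimately show ?thesis by simp
  next
    case False
    have ex: "(\<Sum>b \<in> A. sigma_rm A x b * d b) = (\<Sum>b \<in> A. d b) / real (card A)"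
      unfolding sum_divide_distrib
      by (rule sum.cong) (use False in \<open>auto simp: sigma_rm_def\<close>)
    show ?thesis
    proof (cases "\<exists>b \<in> A. y b > 0")
      case True
      then obtain b0 where b0: "b0 \<in> A" "y b0 > 0" by blast
      have xle: "\<forall>b \<in> A. x b \<le> 0" using False by (simp add: not_less)
      have X0: "X = 0" unfolding X_def
        by (rule sum.neutral) (use xle in \<open>simp add: max_absorb2\<close>)
      then have s0: "(\<Sum>b \<in> A. (max (x b) 0 - max (y b) 0) * d b) = 0" using XY Y0 by simp
      have iff: "((\<Sum>b \<in> A. (max (x b) 0 - max (y b) 0) * d b) = 0) =
          (\<forall>b \<in> A. (max (x b) 0 - max (y b) 0) * d b = 0)"
        by (rule sum_nonneg_eq_0_iff[OF fA]) (rule trm)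
      have "(max (x b0) 0 - max (y b0) 0) * d b0 = 0" using iff s0 b0(1) by blast
      moreover have "x b0 \<le> 0" using xle b0 by blast
      moreover have "max (x b0) 0 = 0" using \<open>x b0 \<le> 0\<close> by (simp add: max_absorb2)
      moreover have "max (y b0) 0 = y b0" using b0 by (simp add: max_absorb1)
      ultimately have "d b0 = 0" using b0 by simp
      then have "x b0 = y b0" using xd[of b0] b0 by (simp add: max_absorb1)
      then show ?thesis using b0 \<open>x b0 \<le> 0\<close> by simp
    next
      case False
      have "(\<Sum>b \<in> A. sigma_rm A y b * d b) = (\<Sum>b \<in> A. d b) / real (card A)"
        unfolding sum_divide_distrib
        by (rule sum.cong) (use False in \<open>auto simp: sigma_rm_def\<close>)
      then show ?thesis using ex sy0 by auto
    qed
  qed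
  show ?thesis using sd[of y] sd[of x] goal sy0 by linarith
qed

lemma Nx_info:
  assumes wf: "wf_efg G" and p: "p \<noteq> Chance" and x: "(K, b) \<in> Nx G p s"
  shows "\<exists>g. g \<in> nonterm G \<and> pl G g = p \<and> K = info G g \<and> own_seq G p g = s \<and> b \<in> acts G g"
proof -
  obtain z where zt: "z \<in> terminals G" and pz: "prefix (s @ [(K, b)]) (own_seq G p z)"
    using x unfolding Nx_def Zs_def by auto
  have k: "length s < length (own_seq G p z)" using prefix_length_le[OF pz] by simp
  obtain i where i: "i < length z" "pl G (take i z) = p"
      "own_seq G p z ! length s = (info G (take i z), z ! i)"
      "own_seq G p (take i z) = take (length s) (own_seq G p z)"
    using own_seq_nth[OF k] by blast
  have "own_seq G p z ! length s = (K, b)" using pz by (auto simp: prefix_def nth_append)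
  then have ia: "info G (take i z) = K" "z ! i = b" using i by auto
  have os: "own_seq G p (take i z) = s" using i(4) pz by (auto simp: prefix_def)
  have zh: "z \<in> hist G" using zt unfolding terminals_def by simp
  have tk: "take (Suc i) z = take i z @ [b]" using i(1) ia(2) by (simp add: take_Suc_conv_app_nth)
  have pre: "prefix (take i z @ [b]) z" unfolding tk[symmetric] by (rule take_is_prefix)
  have ha: "take i z @ [b] \<in> hist G" using hist_prefix[OF wf zh pre] .
  have "take i z \<in> hist G" using wf_closed[OF wf ha] .
  moreover have bA: "b \<in> acts G (take i z)" using ha unfolding acts_def by simp
  ultimately have "take i z \<in> nonterm G"
    unfolding nonterm_def terminals_def by blast
  then show ?thesis using i(2) ia(1) os bA by blast
qed

lemma V_cong_po:
  assumes "\<And>z. z \<in> terminals G \<Longrightarrow> po z = po' z"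
  shows "V G p po sp s = V G p po' sp s"
  unfolding V_def by (rule sum.cong) (auto simp: Zs_def assms)

lemma main_gen:
  assumes wf: "wf_efg G" and p: "p \<noteq> Chance"
    and spo: "comp \<sigma>old p = sp" and spn: "comp \<sigma>new p = sp'"
    and po: "\<And>z. z \<in> terminals G \<Longrightarrow> pi_opp G \<sigma>new p z = pi_opp G \<sigma>old p z"
    and nn: "\<And>K b. sp' K b \<ge> 0"
    and Hk: "\<And>g. g \<in> nonterm G \<Longrightarrow> pl G g = p \<Longrightarrow>
      (\<Sum>b \<in> actsI G (info G g). sp (info G g) b * cfv G \<sigma>old p (info G g) b)
      \<le> (\<Sum>b \<in> actsI G (info G g). sp' (info G g) b * cfv G \<sigma>old p (info G g) b)"
    and I: "I \<in> infosets G p"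
  shows "cfv G \<sigma>old p I a \<le> cfv G \<sigma>new p I a"
proof -
  obtain g where g: "g \<in> nonterm G" "pl G g = p" "I = info G g"
    using I unfolding infosets_def by auto
  define s where "s = own_seq G p g"
  have e1: "cfv G \<sigma>old p I a = V G p (pi_opp G \<sigma>old p) sp (s @ [(I, a)])"
    using cfv_V[OF wf p g(1,2)] spo g(3) s_def by simp
  have e2: "cfv G \<sigma>new p I a = V G p (pi_opp G \<sigma>old p) sp' (s @ [(I, a)])"
    using cfv_V[OF wf p g(1,2), of \<sigma>new] spn g(3) s_def V_cong_po[of G "pi_opp G \<sigma>new p" "pi_opp G \<sigma>old p", OF po]
    by simp
  have "V G p (pi_opp G \<sigma>old p) sp (s @ [(I, a)]) \<le> V G p (pi_opp G \<sigma>old p) sp' (s @ [(I, a)])"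
  proof (rule V_mono[OF fin_term[OF wf] nn])
    fix s' K b assume "(K, b) \<in> Nx G p s'"
    then show "b \<in> actsI G K" using Nx_info[OF wf p] actsI_info[OF wf] p by metis
  next
    fix K
    show "finite (actsI G K)" unfolding actsI_def by (rule fin_acts[OF wf])
  next
    fix s' K b0 assume "(K, b0) \<in> Nx G p s'"
    then obtain h where h: "h \<in> nonterm G" "pl G h = p" "K = info G h" "own_seq G p h = s'"
      using Nx_info[OF wf p] by blast
    have "V G p (pi_opp G \<sigma>old p) sp (s' @ [(K, b)]) = cfv G \<sigma>old p K b" for b
      using cfv_V[OF wf p h(1,2), of \<sigma>old b] h spo by simp
    then show "(\<Sum>b \<in> actsI G K. sp K b * V G p (pi_opp G \<sigma>old p) sp (s' @ [(K, b)]))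
        \<le> (\<Sum>b \<in> actsI G K. sp' K b * V G p (pi_opp G \<sigma>old p) sp (s' @ [(K, b)]))"
      using Hk[OF h(1,2)] h(3) by simp
  qed
  then show ?thesis using e1 e2 by simp
qed

lemma infosets_disj:
  assumes wf: "wf_efg G" and K: "K \<in> infosets G P1" shows "K \<notin> infosets G P2"
proof
  assume "K \<in> infosets G P2"
  then obtain g2 where g2: "g2 \<in> nonterm G" "pl G g2 = P2" "K = info G g2" unfolding infosets_def by auto
  obtain g1 where g1: "g1 \<in> nonterm G" "pl G g1 = P1" "K = info G g1" using K unfolding infosets_def by auto
  have "g2 \<in> info G g1" using g_in_info[OF wf g2(1)] g2 g1 by simp
  then have "pl G g2 = pl G g1" using info_facts(2)[OF wf g1(1)] g1(2) by simp
  then show False using g1 g2 by simp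
qed

lemma upd_out: "I \<notin> infosets G p \<Longrightarrow> upd c G p \<sigma> R I = R I"
  unfolding upd_def by (rule ext) simp

lemma upd_in: "I \<in> infosets G p \<Longrightarrow> upd c G p \<sigma> R I a =
  (if c then max (R I a + cfv G \<sigma> p I a - (\<Sum>b \<in> actsI G I. comp \<sigma> p I b * cfv G \<sigma> p I b)) 0
   else R I a + cfv G \<sigma> p I a - (\<Sum>b \<in> actsI G I. comp \<sigma> p I b * cfv G \<sigma> p I b))"
  unfolding upd_def Let_def by simp

lemma info_in_infosets: "g \<in> nonterm G \<Longrightarrow> info G g \<in> infosets G (pl G g)"
  unfolding infosets_def by auto

lemma acts_ne: "g \<in> nonterm G \<Longrightarrow> acts G g \<noteq> {}"
  unfolding nonterm_def terminals_def by auto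

theorem lemma3:
  fixes G :: "'a efg" and cfrplus :: bool and t :: nat and p :: player
    and I :: "'a list set" and a :: 'a
  assumes "wf_efg G"
    and "p \<in> {P1, P2}"
    and "I \<in> infosets G p"
    and "a \<in> actsI G I"
  shows "let \<sigma>o = (if p = P1 then cfr_sigma cfrplus G t else cfr_sigma cfrplus G (Suc t));
             prof = (\<lambda>\<sigma>p. if p = P1 then (\<sigma>p, \<sigma>o) else (\<sigma>o, \<sigma>p))
         in cfv G (prof (cfr_sigma cfrplus G (Suc t))) p I a
              \<ge> cfv G (prof (cfr_sigma cfrplus G t)) p I a"
proof -
  note wf = assms(1)
  define R where "R = regrets cfrplus G t"
  define R1 where "R1 = upd cfrplus G P1 (strat_of G R, strat_of G R) R"
  define R2 where "R2 = upd cfrplus G P2 (strat_of G R1, strat_of G R) R1"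
  have RS: "regrets cfrplus G (Suc t) = R2"
    unfolding regrets_def R2_def R1_def R_def by (simp add: cfr_step_def Let_def)
  have S0: "cfr_sigma cfrplus G t = strat_of G R" unfolding cfr_sigma_def R_def ..
  have S1: "cfr_sigma cfrplus G (Suc t) = strat_of G R2" unfolding cfr_sigma_def RS ..
  have nn: "strat_of G R2 K b \<ge> 0" for K b unfolding strat_of_def by (rule rm_nonneg)
  have AK: "finite (actsI G (info G g)) \<and> actsI G (info G g) \<noteq> {}" if "g \<in> nonterm G" "pl G g \<noteq> Chance" for g
    using actsI_info[OF wf that] fin_acts[OF wf] acts_ne[OF that(1)] by simp
  show ?thesis
  proof (cases "p = P1")
    case True
    define \<sigma>old where "\<sigma>old = (strat_of G R, strat_of G R)"
    define \<sigma>new where "\<sigma>new = (strat_of G R2, strat_of G R)"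
    have "cfv G \<sigma>old P1 I a \<le> cfv G \<sigma>new P1 I a"
    proof (rule main_gen[OF wf _ _ _ _ nn])
      show "comp \<sigma>old P1 = strat_of G R" unfolding \<sigma>old_def comp_def by simp
      show "comp \<sigma>new P1 = strat_of G R2" unfolding \<sigma>new_def comp_def by simp
      show "pi_opp G \<sigma>new P1 z = pi_opp G \<sigma>old P1 z" for z
        unfolding pi_opp_def
        by (rule prod.cong[OF refl]) (auto simp: act_prob_def \<sigma>new_def \<sigma>old_def split: player.splits)
      show "I \<in> infosets G P1" using assms(3) True by simp
    next
      fix g assume g: "g \<in> nonterm G" "pl G g = P1"
      define K where "K = info G g"
      have Kin: "K \<in> infosets G P1" using info_in_infosets[OF g(1)] g(2) K_def by simp
      have R2K: "R2 K = R1 K" unfolding R2_def by (rule upd_out[OF infosets_disj[OF wf Kin]])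
      have A: "finite (actsI G K)" "actsI G K \<noteq> {}" using AK[OF g(1)] g(2) K_def by auto
      have "(\<Sum>b \<in> actsI G K. sigma_rm (actsI G K) (R K) b * cfv G \<sigma>old P1 K b)
          \<le> (\<Sum>b \<in> actsI G K. sigma_rm (actsI G K) (R1 K) b * cfv G \<sigma>old P1 K b)"
        by (rule rm_step[OF A refl, where cfrplus=cfrplus])
           (simp add: R1_def upd_in[OF Kin] \<sigma>old_def comp_def strat_of_def)
      then show "(\<Sum>b \<in> actsI G (info G g). strat_of G R (info G g) b * cfv G \<sigma>old P1 (info G g) b)
          \<le> (\<Sum>b \<in> actsI G (info G g). strat_of G R2 (info G g) b * cfv G \<sigma>old P1 (info G g) b)"
        unfolding K_def[symmetric] strat_of_def R2K .
    qed simp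
    then show ?thesis using True unfolding Let_def S0 S1 \<sigma>old_def \<sigma>new_def by simp
  next
    case False
    then have P2: "p = P2" using assms(2) by simp
    define \<sigma>old where "\<sigma>old = (strat_of G R2, strat_of G R)"
    define \<sigma>new where "\<sigma>new = (strat_of G R2, strat_of G R2)"
    define \<sigma>upd where "\<sigma>upd = (strat_of G R1, strat_of G R)"
    have R1R: "R1 K = R K" if "K \<notin> infosets G P1" for K
      unfolding R1_def by (rule upd_out[OF that])
    have R21: "R2 K = R1 K" if "K \<in> infosets G P1" for K
      unfolding R2_def by (rule upd_out[OF infosets_disj[OF wf that]])
    have poeq: "pi_opp G \<sigma>upd P2 z = pi_opp G \<sigma>old P2 z" if z: "z \<in> terminals G" for z
      unfolding pi_opp_def
    proof (rule prod.cong[OF refl])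
      fix i assume i: "i \<in> {i. i < length z \<and> pl G (take i z) \<noteq> P2}"
      have zh: "z \<in> hist G" using z unfolding terminals_def by simp
      have tk: "take (Suc i) z = take i z @ [z ! i]" using i by (simp add: take_Suc_conv_app_nth)
      have "prefix (take i z @ [z ! i]) z" unfolding tk[symmetric] by (rule take_is_prefix)
      then have ha: "take i z @ [z ! i] \<in> hist G" using hist_prefix[OF wf zh] by blast
      have "take i z \<in> hist G" using wf_closed[OF wf ha] .
      moreover have "z ! i \<in> acts G (take i z)" using ha unfolding acts_def by simp
      ultimately have nt: "take i z \<in> nonterm G" unfolding nonterm_def terminals_def by blast
      show "act_prob G \<sigma>upd (take i z) (z ! i) = act_prob G \<sigma>old (take i z) (z ! i)"
      proof (cases "pl G (take i z)")
        case P1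
        have "info G (take i z) \<in> infosets G P1" using info_in_infosets[OF nt] P1 by simp
        then show ?thesis using P1 R21 by (simp add: act_prob_def \<sigma>upd_def \<sigma>old_def strat_of_def)
      qed (use i in \<open>auto simp: act_prob_def \<sigma>upd_def \<sigma>old_def\<close>)
    qed
    have "cfv G \<sigma>old P2 I a \<le> cfv G \<sigma>new P2 I a"
    proof (rule main_gen[OF wf _ _ _ _ nn])
      show "comp \<sigma>old P2 = strat_of G R" unfolding \<sigma>old_def comp_def by simp
      show "comp \<sigma>new P2 = strat_of G R2" unfolding \<sigma>new_def comp_def by simp
      show "pi_opp G \<sigma>new P2 z = pi_opp G \<sigma>old P2 z" for z
        unfolding pi_opp_def
        by (rule prod.cong[OF refl]) (auto simp: act_prob_def \<sigma>new_def \<sigma>old_def split: player.splits)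
      show "I \<in> infosets G P2" using assms(3) P2 by simp
    next
      fix g assume g: "g \<in> nonterm G" "pl G g = P2"
      define K where "K = info G g"
      have Kin: "K \<in> infosets G P2" using info_in_infosets[OF g(1)] g(2) K_def by simp
      have Kn1: "K \<notin> infosets G P1" using infosets_disj[OF wf] Kin by blast
      have A: "finite (actsI G K)" "actsI G K \<noteq> {}" using AK[OF g(1)] g(2) K_def by auto
      have cv: "cfv G \<sigma>upd P2 K b = cfv G \<sigma>old P2 K b" for b
      proof -
        have "cfv G \<sigma>upd P2 K b = V G P2 (pi_opp G \<sigma>upd P2) (comp \<sigma>upd P2) (own_seq G P2 g @ [(K, b)])"
          using cfv_V[OF wf _ g] K_def by simp
        also have "\<dots> = V G P2 (pi_opp G \<sigma>old P2) (comp \<sigma>old P2) (own_seq G P2 g @ [(K, b)])"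
          using V_cong_po[of G "pi_opp G \<sigma>upd P2" "pi_opp G \<sigma>old P2", OF poeq]
          by (simp add: \<sigma>upd_def \<sigma>old_def comp_def)
        also have "\<dots> = cfv G \<sigma>old P2 K b"
          using cfv_V[OF wf _ g] K_def by simp
        finally show ?thesis .
      qed
      have cu: "comp \<sigma>upd P2 = strat_of G R" unfolding \<sigma>upd_def comp_def by simp
      have "(\<Sum>b \<in> actsI G K. sigma_rm (actsI G K) (R K) b * cfv G \<sigma>old P2 K b)
          \<le> (\<Sum>b \<in> actsI G K. sigma_rm (actsI G K) (R2 K) b * cfv G \<sigma>old P2 K b)"
        by (rule rm_step[OF A refl, where cfrplus=cfrplus])
           (simp add: R2_def upd_in[OF Kin] cu strat_of_def R1R[OF Kn1] cv flip: \<sigma>upd_def)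
      then show "(\<Sum>b \<in> actsI G (info G g). strat_of G R (info G g) b * cfv G \<sigma>old P2 (info G g) b)
          \<le> (\<Sum>b \<in> actsI G (info G g). strat_of G R2 (info G g) b * cfv G \<sigma>old P2 (info G g) b)"
        unfolding K_def[symmetric] strat_of_def .
    qed simp
    then show ?thesis using P2 unfolding Let_def S0 S1 \<sigma>old_def \<sigma>new_def by simp
  qed
qed

end
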